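(* If $L$ is a regular language, then ${\rm bdi}(L)$ is regular.
   Context: For a word $w=a_1\cdots a_n$, ${\rm fh}(w)=a_1\cdots a_{\lfloor n/2\rfloor}$ and ${\rm lh}(w)=a_{\lfloor n/2\rfloor+1}\cdots a_n$. For words $x=a_1\cdots a_m$ and $y=b_1\cdots b_m$ the perfect shuffle is $x\,\text{sh}\,y=a_1b_1\cdots a_mb_m$, and if $y=b_1\cdots b_{m+1}$ has length $m+1$ then $x\,\text{sh}\,y=a_1b_1\cdots a_mb_mb_{m+1}$. ${\rm bdi}(w)={\rm fh}(w)\,\text{sh}\,{\rm lh}(w)$ and ${\rm bdi}(L)=\{{\rm bdi}(w):w\in L\}$. *)

theory Defs
  imports Main
begin

definition regular :: "'a list set \<Rightarrow> bool" where
  "regular L \<longleftrightarrow>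
     (\<exists>(\<Sigma>::'a set) (Q::nat set) (\<delta>::nat \<Rightarrow> 'a \<Rightarrow> nat) q0 F.
        finite \<Sigma> \<and> finite Q \<and> q0 \<in> Q \<and> F \<subseteq> Q \<and>
        (\<forall>q\<in>Q. \<forall>a\<in>\<Sigma>. \<delta> q a \<in> Q) \<and>
        L = {w. w \<in> lists \<Sigma> \<and> foldl \<delta> q0 w \<in> F})"

definition fh :: "'a list \<Rightarrow> 'a list" where
  "fh w = take (length w div 2) w"

definition lh :: "'a list \<Rightarrow> 'a list" where
  "lh w = drop (length w div 2) w"

text \<open>Perfect shuffle; only used when length ys = length xs or length xs + 1.\<close>
fun psh :: "'a list \<Rightarrow> 'a list \<Rightarrow> 'a list" where
  "psh [] ys = ys"
| "psh (x # xs) [] = x # xs"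
| "psh (x # xs) (y # ys) = x # y # psh xs ys"

definition bdi :: "'a list \<Rightarrow> 'a list" where
  "bdi w = psh (fh w) (lh w)"

definition bdi_lang :: "'a list set \<Rightarrow> 'a list set" where
  "bdi_lang L = bdi ` L"

end

theory Submission
  imports Defs "HOL-Library.FuncSet"
begin

lemma regularI:
  fixes \<Sigma> :: "'a set" and Q :: "'b set"
  assumes "finite \<Sigma>" "finite Q" "q0 \<in> Q" "F \<subseteq> Q"
    and cl: "\<forall>q\<in>Q. \<forall>a\<in>\<Sigma>. \<delta> q a \<in> Q"
    and L: "L = {w. w \<in> lists \<Sigma> \<and> foldl \<delta> q0 w \<in> F}"
  shows "regular L"
proof -
  obtain h :: "'b \<Rightarrow> nat" and n where hn: "h ` Q = {i. i < n}" "inj_on h Q"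
    using finite_imp_inj_to_nat_seg[OF assms(2)] by blast
  define h' where "h' = inv_into Q h"
  define \<delta>' where "\<delta>' = (\<lambda>i a. h (\<delta> (h' i) a))"
  have hh: "h' (h q) = q" if "q \<in> Q" for q
    using hn(2) that by (simp add: h'_def)
  have run: "foldl \<delta>' (h q) w = h (foldl \<delta> q w) \<and> foldl \<delta> q w \<in> Q"
    if "q \<in> Q" "w \<in> lists \<Sigma>" for q w
    using that
  proof (induction w arbitrary: q)
    case Nil then show ?case by simp
  next
    case (Cons a w)
    have "\<delta> q a \<in> Q" using cl Cons.prems by auto
    then show ?case using Cons.IH[of "\<delta> q a"] Cons.prems hh by (simp add: \<delta>'_def)
  qed
  have "finite (h ` Q)" "h q0 \<in> h ` Q" "h ` F \<subseteq> h ` Q"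
    using assms by auto
  moreover have "\<forall>q\<in>h ` Q. \<forall>a\<in>\<Sigma>. \<delta>' q a \<in> h ` Q"
    using cl hh by (auto simp: \<delta>'_def)
  moreover have "L = {w. w \<in> lists \<Sigma> \<and> foldl \<delta>' (h q0) w \<in> h ` F}"
  proof -
    have "foldl \<delta>' (h q0) w \<in> h ` F \<longleftrightarrow> foldl \<delta> q0 w \<in> F" if "w \<in> lists \<Sigma>" for w
      using run[OF assms(3) that] hn(2) assms(4) by (auto simp: inj_on_image_mem_iff)
    then show ?thesis using L by auto
  qed
  ultimately show ?thesis unfolding regular_def using assms(1) by blast
qed

lemma set_psh: "set (psh xs ys) = set xs \<union> set ys"
  by (induction xs ys rule: psh.induct) auto

lemma psh_snoc: "length u = length v \<Longrightarrow> psh u (v @ [b]) = psh u v @ [b]"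
  by (induction u v rule: list_induct2) auto

lemma decomp: "\<exists>u v. length u = length v \<and> (z = psh u v \<or> (\<exists>b. z = psh u v @ [b]))"
proof (induction z rule: induct_list012)
  case 1 then show ?case by (intro exI[of _ "[]"]) auto
next
  case (2 x) then show ?case by (intro exI[of _ "[]"]) auto
next
  case (3 x y zs)
  then obtain u v where "length u = length v" "zs = psh u v \<or> (\<exists>b. zs = psh u v @ [b])" by blast
  then show ?case by (intro exI[of _ "x # u"] exI[of _ "y # v"]) auto
qed

lemma bdi_even: "length u = length v \<Longrightarrow> bdi (u @ v) = psh u v"
  by (simp add: bdi_def fh_def lh_def)

lemma bdi_odd: "length u = length v \<Longrightarrow> bdi (u @ v @ [b]) = psh u v @ [b]"
proof -
  assume a: "length u = length v"
  have "length (u @ v @ [b]) div 2 = length u" using a by simp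
  then show ?thesis using a by (simp add: bdi_def fh_def lh_def psh_snoc)
qed

lemma bdi_cases:
  obtains u v where "length u = length v" "w = u @ v" "bdi w = psh u v"
  | u v b where "length u = length v" "w = u @ v @ [b]" "bdi w = psh u v @ [b]"
proof (cases "even (length w)")
  case True
  let ?u = "take (length w div 2) w" and ?v = "drop (length w div 2) w"
  have "length ?u = length ?v" using True by auto
  then show ?thesis using that(1)[of ?u ?v] bdi_even[of ?u ?v] by simp
next
  case False
  let ?u = "take (length w div 2) w" and ?v = "drop (length w div 2) w"
  have "length w > 0" using False by (cases w) auto
  then have "?v \<noteq> []" by (simp add: not_le)
  then obtain v b where vb: "?v = v @ [b]" by (metis rev_exhaust)
  obtain k where k: "length w = 2 * k + 1" using False by (metis oddE)
  have "length ?v = length ?u + 1" using k by simp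
  then have l: "length ?u = length v" using vb by simp
  have wd: "w = ?u @ v @ [b]" using vb by (metis append_take_drop_id)
  have "bdi w = psh ?u v @ [b]" using bdi_odd[OF l, of b] wd by metis
  then show ?thesis using that(2)[OF l wd] by blast
qed

definition Dt :: "(nat \<Rightarrow> 'a \<Rightarrow> nat) \<Rightarrow> nat set \<Rightarrow> nat \<times> (nat \<Rightarrow> nat) \<times> 'a option
   \<Rightarrow> 'a \<Rightarrow> nat \<times> (nat \<Rightarrow> nat) \<times> 'a option" where
  "Dt \<delta> Q s c = (case s of (q1, g, None) \<Rightarrow> (q1, g, Some c)
      | (q1, g, Some a) \<Rightarrow> (\<delta> q1 a, restrict (\<lambda>p. \<delta> (g p) c) Q, None))"

lemma run_even:
  "length u = length v \<Longrightarrow>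
   foldl (Dt \<delta> Q) (q, restrict h Q, None) (psh u v) =
     (foldl \<delta> q u, restrict (\<lambda>p. foldl \<delta> (h p) v) Q, None)"
proof (induction u v arbitrary: q h rule: list_induct2)
  case Nil then show ?case by simp
next
  case (Cons x u y v)
  have e: "restrict (\<lambda>p. \<delta> (restrict h Q p) y) Q = restrict (\<lambda>p. \<delta> (h p) y) Q"
    by (auto simp: restrict_def)
  have st: "Dt \<delta> Q (Dt \<delta> Q (q, restrict h Q, None) x) y = (\<delta> q x, restrict (\<lambda>p. \<delta> (h p) y) Q, None)"
    by (simp only: Dt_def e prod.case option.case)
  show ?case using Cons.IH[of "\<delta> q x" "\<lambda>p. \<delta> (h p) y"] by (simp only: foldl_Cons psh.simps st)
qed

theorem mainTheorem13:
  fixes L :: "'a list set"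
  assumes "regular L"
  shows "regular (bdi_lang L)"
proof -
  obtain \<Sigma> :: "'a set" and Q :: "nat set" and \<delta> q0 F where
    fin: "finite \<Sigma>" "finite Q" and q0: "q0 \<in> Q" and FQ: "F \<subseteq> Q"
    and cl: "\<forall>q\<in>Q. \<forall>a\<in>\<Sigma>. \<delta> q a \<in> Q"
    and L: "L = {w. w \<in> lists \<Sigma> \<and> foldl \<delta> q0 w \<in> F}"
    using assms unfolding regular_def by blast
  define G where "G = Q \<rightarrow>\<^sub>E Q"
  define Qs where "Qs = Q \<times> G \<times> (insert None (Some ` \<Sigma>))"
  define s0 where "s0 = (q0, restrict (\<lambda>p. p) Q, None :: 'a option)"
  define Fa where "Fa = Qs \<inter> {s. case s of (q1, g, None) \<Rightarrow> g q1 \<in> F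
                                  | (q1, g, Some a) \<Rightarrow> \<delta> (g q1) a \<in> F}"
  have runQ: "foldl \<delta> q w \<in> Q" if "q \<in> Q" "w \<in> lists \<Sigma>" for q w
    using that by (induction w arbitrary: q) (auto simp: cl)
  have finQs: "finite Qs" unfolding Qs_def G_def using fin by (auto intro: finite_PiE)
  have s0Q: "s0 \<in> Qs" unfolding s0_def Qs_def G_def using q0 by auto
  have clQs: "\<forall>s\<in>Qs. \<forall>c\<in>\<Sigma>. Dt \<delta> Q s c \<in> Qs"
    using cl by (auto simp: Qs_def G_def Dt_def PiE_def Pi_def)
  have rs: "foldl (Dt \<delta> Q) s z \<in> Qs" if "s \<in> Qs" "z \<in> lists \<Sigma>" for s z
    using that clQs by (induction z arbitrary: s) auto
  have G_restr: "restrict (\<lambda>p. p) Q = restrict (\<lambda>p. p) Q" by simp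
  have ev: "foldl (Dt \<delta> Q) s0 (psh u v) = (foldl \<delta> q0 u, restrict (\<lambda>p. foldl \<delta> p v) Q, None)"
    if "length u = length v" for u v
    using run_even[OF that, of \<delta> Q q0 "\<lambda>p. p"] by (simp add: s0_def)
  have od: "foldl (Dt \<delta> Q) s0 (psh u v @ [b]) = (foldl \<delta> q0 u, restrict (\<lambda>p. foldl \<delta> p v) Q, Some b)"
    if "length u = length v" for u v b
    using ev[OF that] by (simp add: Dt_def)
  have eq: "bdi_lang L = {z. z \<in> lists \<Sigma> \<and> foldl (Dt \<delta> Q) s0 z \<in> Fa}"
  proof (intro set_eqI iffI)
    fix z assume "z \<in> bdi_lang L"
    then obtain w where w: "w \<in> L" "z = bdi w" by (auto simp: bdi_lang_def)
    have wl: "w \<in> lists \<Sigma>" "foldl \<delta> q0 w \<in> F" using w L by auto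
    show "z \<in> {z. z \<in> lists \<Sigma> \<and> foldl (Dt \<delta> Q) s0 z \<in> Fa}"
    proof (cases w rule: bdi_cases)
      case (1 u v)
      have zl: "z \<in> lists \<Sigma>" using wl 1 w by (auto simp: set_psh)
      have uQ: "foldl \<delta> q0 u \<in> Q" using runQ[OF q0] wl 1 by auto
      show ?thesis using zl rs[OF s0Q zl] ev[OF 1(1)] wl 1 w uQ by (auto simp: Fa_def)
    next
      case (2 u v b)
      have zl: "z \<in> lists \<Sigma>" using wl 2 w by (auto simp: set_psh)
      have uQ: "foldl \<delta> q0 u \<in> Q" using runQ[OF q0] wl 2 by auto
      show ?thesis using zl rs[OF s0Q zl] od[OF 2(1)] wl 2 w uQ by (auto simp: Fa_def)
    qed
  next
    fix z assume z: "z \<in> {z. z \<in> lists \<Sigma> \<and> foldl (Dt \<delta> Q) s0 z \<in> Fa}"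
    obtain u v where uv: "length u = length v" "z = psh u v \<or> (\<exists>b. z = psh u v @ [b])"
      using decomp by blast
    show "z \<in> bdi_lang L"
    proof (cases "z = psh u v")
      case True
      have ul: "u \<in> lists \<Sigma>" "v \<in> lists \<Sigma>" using z True by (auto simp: set_psh)
      have uQ: "foldl \<delta> q0 u \<in> Q" using runQ[OF q0 ul(1)] .
      have "u @ v \<in> L" using z True ev[OF uv(1)] ul uQ by (auto simp: Fa_def L)
      then show ?thesis using bdi_even[OF uv(1)] True unfolding bdi_lang_def by (metis image_eqI)
    next
      case False
      then obtain b where b: "z = psh u v @ [b]" using uv by blast
      have ul: "u \<in> lists \<Sigma>" "v \<in> lists \<Sigma>" "b \<in> \<Sigma>" using z b by (auto simp: set_psh)
      have uQ: "foldl \<delta> q0 u \<in> Q" using runQ[OF q0 ul(1)] .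
      have "u @ v @ [b] \<in> L" using z b od[OF uv(1)] ul uQ by (auto simp: Fa_def L)
      then show ?thesis using bdi_odd[OF uv(1)] b unfolding bdi_lang_def by (metis image_eqI)
    qed
  qed
  have FaQ: "Fa \<subseteq> Qs" by (auto simp: Fa_def)
  show ?thesis using regularI[OF fin(1) finQs s0Q FaQ clQs eq] .
qed

end
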